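(* Let $r\ge 1$ and let $G$ be a finite simple undirected graph on $n\ge r+1$ vertices with adjacency eigenvalues $\lambda_1(G)\ge\cdots\ge\lambda_n(G)$. Then \[ \lambda_{r+1}(G)\ \le\ \frac{\beta_r}{2r}\,n-1 . \]
   Context: For integers $N\ge r\ge 1$, let $\mathcal P_r(N)=\{Q\in\mathbb R^{N\times N}: Q^2=Q,\ Q^T=Q,\ \operatorname{rank}Q=r\}$ be the set of rank-$r$ orthogonal projections. Define \[ \beta_r(N)=\frac1N\max_{Q\in\mathcal P_r(N)}\sum_{i,j=1}^N |q_{ij}|,\qquad \beta_r=\sup_{N\ge r}\beta_r(N), \] where $Q=(q_{ij})$. Eigenvalues of a graph are those of its adjacency matrix, listed in nonincreasing order. *)

theory Defs
  imports "Jordan_Normal_Form.Char_Poly" "Jordan_Normal_Form.DL_Rank"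
    "HOL-Computational_Algebra.Polynomial"
begin

text \<open>Finite simple undirected graph on vertex set {0..<n}, given by an edge relation E
  (only its restriction to {0..<n} matters).\<close>
definition simple_graph :: "nat \<Rightarrow> (nat \<Rightarrow> nat \<Rightarrow> bool) \<Rightarrow> bool" where
  "simple_graph n E \<longleftrightarrow> (\<forall>i<n. \<forall>j<n. E i j = E j i) \<and> (\<forall>i<n. \<not> E i i)"

definition adj_mat :: "nat \<Rightarrow> (nat \<Rightarrow> nat \<Rightarrow> bool) \<Rightarrow> real mat" where
  "adj_mat n E = mat n n (\<lambda>(i,j). if E i j then 1 else 0)"

text \<open>Eigenvalues (roots of the characteristic polynomial, with multiplicity), listed in
  nonincreasing order; entry k (0-based) is lambda_(k+1).\<close>
definition eigenvalues_desc :: "real mat \<Rightarrow> real list" where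
  "eigenvalues_desc A = rev (sorted_list_of_multiset (proots (char_poly A)))"

definition orth_proj :: "nat \<Rightarrow> nat \<Rightarrow> real mat \<Rightarrow> bool" where
  "orth_proj N r Q \<longleftrightarrow> Q \<in> carrier_mat N N \<and> Q * Q = Q \<and> transpose_mat Q = Q
     \<and> vec_space.rank N Q = r"

definition beta_N :: "nat \<Rightarrow> nat \<Rightarrow> real" where
  "beta_N r N = (1 / real N) *
     Sup {(\<Sum>i<N. \<Sum>j<N. \<bar>Q $$ (i,j)\<bar>) | Q. orth_proj N r Q}"

definition beta :: "nat \<Rightarrow> real" where
  "beta r = Sup {beta_N r N | N. N \<ge> r}"

end

theory Submission
  imports Defs "Jordan_Normal_Form.Schur_Decomposition"
begin


lemma real_cscalar: "(v :: real vec) \<bullet>c w = v \<bullet> w"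
proof -
  have "conjugate w = w" by (rule eq_vecI) auto
  thus ?thesis by simp
qed

lemma real_sq_zero: assumes "(v :: real vec) \<in> carrier_vec n" "v \<bullet> v = 0" shows "v = 0\<^sub>v n"
proof -
  have "(\<Sum>i<n. v$i * v$i) = 0" using assms by (simp add: scalar_prod_def lessThan_atLeast0)
  hence "\<forall>i\<in>{..<n}. v$i * v$i = 0" by (subst sum_nonneg_eq_0_iff[symmetric]) auto
  thus ?thesis using assms by (intro eq_vecI) auto
qed

lemma real_sq_pos: assumes "(v :: real vec) \<in> carrier_vec n" "v \<noteq> 0\<^sub>v n" shows "v \<bullet> v > 0"
proof -
  have "v \<bullet> v \<ge> 0" using assms by (simp add: scalar_prod_def sum_nonneg)
  thus ?thesis using real_sq_zero[OF assms(1)] assms(2) by force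
qed

lemma quad_sym: assumes A: "(A :: real mat) \<in> carrier_mat n n" and S: "transpose_mat A = A"
  and x: "x \<in> carrier_vec n" and y: "y \<in> carrier_vec n"
  shows "x \<bullet> (A *\<^sub>v y) = y \<bullet> (A *\<^sub>v x)"
proof -
  have s: "A $$ (i,j) = A $$ (j,i)" if "i < n" "j < n" for i j
    using S that A by (metis carrier_matD index_transpose_mat(1))
  have "x \<bullet> (A *\<^sub>v y) = (\<Sum>i<n. x$i * (\<Sum>j<n. A $$ (i,j) * y$j))"
    using A x y by (simp add: scalar_prod_def lessThan_atLeast0 mult_mat_vec_def row_def)
  also have "\<dots> = (\<Sum>i<n. \<Sum>j<n. x$i * A $$ (i,j) * y$j)" by (simp add: sum_distrib_left mult.assoc)
  also have "\<dots> = (\<Sum>j<n. \<Sum>i<n. x$i * A $$ (i,j) * y$j)" by (rule sum.swap)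
  also have "\<dots> = (\<Sum>j<n. y$j * (\<Sum>i<n. A $$ (j,i) * x$i))"
    by (auto simp: sum_distrib_left s intro!: sum.cong)
  also have "\<dots> = y \<bullet> (A *\<^sub>v x)"
    using A x y by (simp add: scalar_prod_def lessThan_atLeast0 mult_mat_vec_def row_def)
  finally show ?thesis .
qed

lemma congr_entry: assumes U: "(U :: 'a :: comm_ring_1 mat) \<in> carrier_mat n m" and A: "A \<in> carrier_mat n n"
  and i: "i < m" and j: "j < m"
  shows "(transpose_mat U * A * U) $$ (i,j) = col U i \<bullet> (A *\<^sub>v col U j)"
proof -
  have "transpose_mat U * A * U = transpose_mat U * (A * U)"
    using U A by (intro assoc_mult_mat) auto
  have AU: "A * U \<in> carrier_mat n m" using A U by simp
  have c: "col (A * U) j = A *\<^sub>v col U j" by (rule col_mult2[OF A U j])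
  have "(transpose_mat U * (A * U)) $$ (i,j) = row (transpose_mat U) i \<bullet> col (A * U) j"
    using U AU i j by (intro index_mult_mat) auto
  also have "row (transpose_mat U) i = col U i" using U i by (simp add: row_transpose)
  finally show ?thesis using \<open>transpose_mat U * A * U = transpose_mat U * (A * U)\<close> c by simp
qed

definition diagm :: "nat \<Rightarrow> real list \<Rightarrow> real mat" where
  "diagm n es = mat n n (\<lambda>(i,j). if i = j then es ! i else 0)"

lemma spectral:
  fixes A :: "real mat"
  assumes "A \<in> carrier_mat n n" "transpose_mat A = A" "char_poly A = (\<Prod>e\<leftarrow>es. [:-e,1:])"
  shows "\<exists>U. U \<in> carrier_mat n n \<and> transpose_mat U * U = 1\<^sub>m n \<and>
     transpose_mat U * A * U = diagm n es"
  using assms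
proof (induct es arbitrary: n A)
  case Nil
  from degree_monic_char_poly[OF Nil(1)] Nil(3) have n: "n = 0" by simp
  show ?case
    by (rule exI[of _ "1\<^sub>m 0"], unfold n diagm_def, auto intro!: eq_matI)
next
  case (Cons e es n A)
  note A = Cons(2) and S = Cons(3)
  have cp: "char_poly A = [: -e, 1 :] * (\<Prod>e \<leftarrow> es. [:- e, 1:])" using Cons(4) by simp
  have mon: "monic (\<Prod>e\<leftarrow> es. [:- e, 1:])" by (rule monic_prod_list, auto)
  have deg: "degree (char_poly A) = Suc (degree (\<Prod>e\<leftarrow> es. [:- e, 1:]))" unfolding cp
    by (subst degree_mult_eq, insert mon, auto)
  with degree_monic_char_poly[OF A] have n: "n \<noteq> 0" by auto
  have ev: "eigenvalue A e" unfolding eigenvalue_root_char_poly[OF A] cp by simp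
  define v0 where "v0 = find_eigenvector A e"
  from find_eigenvector[OF A ev] have "eigenvector A v0 e" unfolding v0_def .
  hence v0: "v0 \<in> carrier_vec n" "v0 \<noteq> 0\<^sub>v n" "A *\<^sub>v v0 = e \<cdot>\<^sub>v v0"
    unfolding eigenvector_def using A by auto
  define v where "v = (1 / sqrt (v0 \<bullet> v0)) \<cdot>\<^sub>v v0"
  have pos: "v0 \<bullet> v0 > 0" using real_sq_pos[OF v0(1,2)] .
  have v: "v \<in> carrier_vec n" unfolding v_def using v0 by auto
  have vv: "v \<bullet> v = 1" unfolding v_def using v0 pos
    by (simp add: smult_scalar_prod_distrib scalar_prod_smult_distrib real_sqrt_mult[symmetric])
  have vnz: "v \<noteq> 0\<^sub>v n" using vv v by auto
  have Av: "A *\<^sub>v v = e \<cdot>\<^sub>v v" unfolding v_def using v0 A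
    by (simp add: mult_mat_vec smult_smult_assoc mult.commute)
  interpret cof_vec_space n "TYPE(real)" .
  define b where "b = basis_completion v"
  from basis_completion[OF v vnz, folded b_def]
  have dist_b: "distinct b" 
    and indep: "\<not> lin_dep (set b)" and b: "set b \<subseteq> carrier_vec n" and hdb: "hd b = v" 
    and len_b: "length b = n" by auto
  from hdb len_b n obtain vs where bv: "b = v # vs" by (cases b, auto)
  define ws where "ws = gram_schmidt n b"
  from gram_schmidt_result[OF b dist_b indep refl, folded ws_def]
  have ws: "set ws \<subseteq> carrier_vec n" "corthogonal ws" "length ws = n" 
    by (auto simp: len_b)
  from gram_schmidt_hd[OF v, of vs, folded bv] have hdws: "hd ws = v" unfolding ws_def .
  define us where "us = map (\<lambda>w. (1 / sqrt (w \<bullet> w)) \<cdot>\<^sub>v w) ws"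
  have lus: "length us = n" unfolding us_def using ws by simp
  have usc: "us ! i \<in> carrier_vec n" if "i < n" for i
    unfolding us_def using ws that by auto
  have wpos: "ws ! i \<bullet> ws ! i > 0" if "i < n" for i
  proof -
    have "ws ! i \<bullet>c ws ! i \<noteq> 0" using corthogonalD[OF ws(2)] that ws(3) by auto
    moreover have "ws ! i \<bullet> ws ! i \<ge> 0" by (simp add: scalar_prod_def sum_nonneg)
    ultimately show ?thesis by (simp add: real_cscalar)
  qed
  have usorth: "us ! i \<bullet> us ! j = (if i = j then 1 else 0)" if "i < n" "j < n" for i j
  proof -
    have wi: "ws ! i \<in> carrier_vec n" "ws ! j \<in> carrier_vec n" using ws that by auto
    have "us ! i \<bullet> us ! j = (1 / sqrt (ws!i \<bullet> ws!i)) * (1 / sqrt (ws!j \<bullet> ws!j)) * (ws ! i \<bullet> ws ! j)"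
      unfolding us_def using that ws wi
      by (simp add: smult_scalar_prod_distrib scalar_prod_smult_distrib)
    also have "\<dots> = (if i = j then 1 else 0)"
    proof (cases "i = j")
      case True
      thus ?thesis using wpos[OF that(1)]
        by (simp add: real_sqrt_mult[symmetric]) 
    next
      case False
      hence "ws ! i \<bullet>c ws ! j = 0" using corthogonalD[OF ws(2)] that ws(3) by auto
      thus ?thesis using False by (simp add: real_cscalar)
    qed
    finally show ?thesis .
  qed
  have us0: "us ! 0 = v"
  proof -
    have "ws ! 0 = v" using hdws ws(3) n by (metis hd_conv_nth length_0_conv)
    thus ?thesis unfolding us_def using ws(3) n vv by simp
  qed
  define W where "W = mat_of_cols n us"
  have W: "W \<in> carrier_mat n n" unfolding W_def using lus by auto
  have colW: "col W i = us ! i" if "i < n" for i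
    unfolding W_def using lus that usc[OF that] by (simp add: col_mat_of_cols)
  have WW: "transpose_mat W * W = 1\<^sub>m n"
    by (rule eq_matI, insert W, auto simp: colW usorth)
  have WW2: "W * transpose_mat W = 1\<^sub>m n"
    using mat_mult_left_right_inverse[OF _ W WW] W by auto
  define A' where "A' = transpose_mat W * A * W"
  have A': "A' \<in> carrier_mat n n" unfolding A'_def using W A by auto
  have A'e: "A' $$ (i,j) = us ! i \<bullet> (A *\<^sub>v us ! j)" if "i < n" "j < n" for i j
    unfolding A'_def using congr_entry[OF W A that] that by (simp add: colW)
  have A'sym: "A' $$ (i,j) = A' $$ (j,i)" if "i < n" "j < n" for i j
    using that by (simp add: A'e quad_sym[OF A S usc usc])
  have A'0: "A' $$ (i,0) = (if i = 0 then e else 0)" if "i < n" for i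
  proof -
    have "A' $$ (i,0) = us ! i \<bullet> (e \<cdot>\<^sub>v v)" using A'e[OF that] n us0 Av by simp
    also have "\<dots> = e * (us ! i \<bullet> us ! 0)"
      using scalar_prod_smult_distrib[OF usc[OF that] v] us0 by simp
    finally show ?thesis using usorth[OF that, of 0] n by simp
  qed
  define A3 where "A3 = mat (n-1) (n-1) (\<lambda>(i,j). A' $$ (Suc i, Suc j))"
  have A3: "A3 \<in> carrier_mat (n-1) (n-1)" unfolding A3_def by auto
  have A3S: "transpose_mat A3 = A3"
    by (rule eq_matI, unfold A3_def, auto simp: A'sym)
  define A1 where "A1 = mat 1 1 (\<lambda>_. e)"
  have A1: "A1 \<in> carrier_mat 1 1" unfolding A1_def by auto
  have nn: "n = 1 + (n - 1)" using n by simp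
  have A'blk: "A' = four_block_mat A1 (0\<^sub>m 1 (n-1)) (0\<^sub>m (n-1) 1) A3"
  proof (rule eq_matI)
    fix i j assume i: "i < dim_row (four_block_mat A1 (0\<^sub>m 1 (n-1)) (0\<^sub>m (n-1) 1) A3)"
      and j: "j < dim_col (four_block_mat A1 (0\<^sub>m 1 (n-1)) (0\<^sub>m (n-1) 1) A3)"
    hence i': "i < n" and j': "j < n" using A1 A3 n by auto
    show "A' $$ (i, j) = four_block_mat A1 (0\<^sub>m 1 (n-1)) (0\<^sub>m (n-1) 1) A3 $$ (i, j)"
      using i' j' A1 A3 n A'0 A'sym[OF i' j'] A'0[OF j']
      by (cases i; cases j; auto simp: A1_def A3_def)
  qed (insert A' A1 A3 n, auto)
  have sim: "similar_mat A A'"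
    unfolding similar_mat_def
  proof (intro exI)
    show "similar_mat_wit A A' W (transpose_mat W)"
    proof (rule similar_mat_witI[of _ _ n])
      have "W * A' * transpose_mat W = (W * transpose_mat W) * A * (W * transpose_mat W)"
        unfolding A'_def using W A
        by (simp add: assoc_mult_mat[of _ n n _ n _ n])
      thus "A = W * A' * transpose_mat W" using WW2 A by simp
    qed (insert WW WW2 W A A', auto)
  qed
  have "char_poly A = char_poly A'" by (rule char_poly_similar[OF sim])
  also have "\<dots> = char_poly A1 * char_poly A3"
    unfolding A'blk by (rule char_poly_four_block_zeros_col[OF A1 _ A3], auto)
  also have "char_poly A1 = [: -e,1 :]"
    by (simp add: A1_def char_poly_defs det_def sign_def)
  finally have cp3: "char_poly A3 = (\<Prod> e \<leftarrow> es. [:- e, 1:])" unfolding cp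
    by (metis mult_cancel_left pCons_eq_0_iff zero_neq_one)
  from Cons(1)[OF A3 A3S cp3] obtain U3 where U3: "U3 \<in> carrier_mat (n-1) (n-1)"
    and U3U3: "transpose_mat U3 * U3 = 1\<^sub>m (n-1)"
    and U3A: "transpose_mat U3 * A3 * U3 = diagm (n-1) es" by blast
  define V where "V = four_block_mat (1\<^sub>m 1) (0\<^sub>m 1 (n-1)) (0\<^sub>m (n-1) 1) U3"
  have V: "V \<in> carrier_mat n n" unfolding V_def using U3 n by auto
  have VT: "transpose_mat V = four_block_mat (1\<^sub>m 1) (0\<^sub>m 1 (n-1)) (0\<^sub>m (n-1) 1) (transpose_mat U3)"
    unfolding V_def by (subst transpose_four_block_mat, insert U3, auto)
  have VV: "transpose_mat V * V = 1\<^sub>m n"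
    unfolding VT by (subst V_def, subst mult_four_block_mat, insert U3 U3U3 n, auto simp: nn[symmetric])
  have VAV: "transpose_mat V * A' * V = diagm n (e # es)"
  proof -
    have "transpose_mat V * A' * V = four_block_mat A1 (0\<^sub>m 1 (n-1)) (0\<^sub>m (n-1) 1) (transpose_mat U3 * A3 * U3)"
      unfolding VT A'blk
      by (subst V_def, (subst mult_four_block_mat, insert U3 A3 A1, auto)+)
    also have "\<dots> = diagm n (e # es)"
      unfolding U3A by (rule eq_matI, insert n, auto simp: diagm_def A1_def)
    finally show ?thesis .
  qed
  define U where "U = W * V"
  show ?case
  proof (intro exI conjI)
    show U: "U \<in> carrier_mat n n" unfolding U_def using W V by auto
    have UT: "transpose_mat U = transpose_mat V * transpose_mat W"
      unfolding U_def by (rule transpose_mult[OF W V])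
    have "transpose_mat U * U = transpose_mat V * (transpose_mat W * W) * V"
      unfolding UT unfolding U_def using W V by (simp add: assoc_mult_mat[of _ n n _ n _ n])
    thus "transpose_mat U * U = 1\<^sub>m n" using WW VV V by simp
    have "transpose_mat U * A * U = transpose_mat V * A' * V"
      unfolding UT unfolding U_def A'_def using W V A by (simp add: assoc_mult_mat[of _ n n _ n _ n])
    thus "transpose_mat U * A * U = diagm n (e # es)" using VAV by simp
  qed
qed



lemma map_poly_of_real_mult: "map_poly (complex_of_real) (p * q) = map_poly complex_of_real p * map_poly complex_of_real q"
  by (rule poly_eqI) (simp add: coeff_mult coeff_map_poly of_real_sum)

lemma sym_eig_real:
  fixes A :: "real mat" and a :: complex
  assumes A: "A \<in> carrier_mat n n" and S: "transpose_mat A = A"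
    and ev: "eigenvalue (map_mat complex_of_real A) a"
  shows "Im a = 0"
proof -
  let ?B = "map_mat complex_of_real A"
  have B: "?B \<in> carrier_mat n n" using A by auto
  from ev obtain v where "eigenvector ?B v a" unfolding eigenvalue_def by auto
  hence v: "v \<in> carrier_vec n" "v \<noteq> 0\<^sub>v n" "?B *\<^sub>v v = a \<cdot>\<^sub>v v"
    unfolding eigenvector_def using B by auto
  have s: "A $$ (i,j) = A $$ (j,i)" if "i < n" "j < n" for i j
    using S that A by (metis carrier_matD index_transpose_mat(1))
  have row: "(\<Sum>j<n. complex_of_real (A $$ (i,j)) * v$j) = a * v$i" if "i < n" for i
  proof -
    have "(?B *\<^sub>v v) $ i = (a \<cdot>\<^sub>v v) $ i" using v(3) by simp
    thus ?thesis using that A v(1) by (simp add: mult_mat_vec_def scalar_prod_def lessThan_atLeast0 row_def)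
  qed
  define s where "s = (\<Sum>i<n. \<Sum>j<n. cnj (v$i) * complex_of_real (A $$ (i,j)) * v$j)"
  define N where "N = (\<Sum>i<n. cnj (v$i) * v$i)"
  have "s = (\<Sum>i<n. cnj (v$i) * (\<Sum>j<n. complex_of_real (A $$ (i,j)) * v$j))"
    unfolding s_def by (simp add: sum_distrib_left mult.assoc)
  also have "\<dots> = (\<Sum>i<n. a * (cnj (v$i) * v$i))"
    by (intro sum.cong refl, simp add: row)
  also have "\<dots> = a * N" unfolding N_def by (simp add: sum_distrib_left)
  finally have s1: "s = a * N" .
  have "cnj s = (\<Sum>i<n. \<Sum>j<n. v$i * complex_of_real (A $$ (i,j)) * cnj (v$j))"
    unfolding s_def by (simp add: cnj_sum)
  also have "\<dots> = (\<Sum>j<n. \<Sum>i<n. v$i * complex_of_real (A $$ (i,j)) * cnj (v$j))" by (rule sum.swap)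
  also have "\<dots> = s" unfolding s_def
  proof (intro sum.cong refl)
    fix j i assume j: "j \<in> {..<n}" and i: "i \<in> {..<n}"
    have "A $$ (i,j) = A $$ (j,i)" using s i j by auto
    thus "v$i * complex_of_real (A $$ (i,j)) * cnj (v$j) = cnj (v$j) * complex_of_real (A $$ (j,i)) * v$i"
      by (simp only: mult.commute mult.left_commute)
  qed
  finally have s2: "cnj s = s" .
  have Nr: "N = complex_of_real (\<Sum>i<n. (cmod (v$i))^2)" unfolding N_def of_real_sum
    by (intro sum.cong refl) (simp only: complex_norm_square mult.commute)
  have "N \<noteq> 0"
  proof
    assume "N = 0"
    hence "(\<Sum>i<n. (cmod (v$i))^2) = 0" using Nr by (metis of_real_eq_0_iff)
    hence "\<forall>i\<in>{..<n}. (cmod (v$i))^2 = 0" by (subst sum_nonneg_eq_0_iff[symmetric]) auto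
    hence "v = 0\<^sub>v n" using v(1) by (intro eq_vecI) auto
    thus False using v(2) by simp
  qed
  have "cnj N = N" unfolding Nr by simp
  with s1 s2 have "cnj a * N = a * N" by (metis complex_cnj_mult)
  with \<open>N \<noteq> 0\<close> have "cnj a = a" by simp
  thus ?thesis by (metis Reals_cnj_iff complex_is_Real_iff)
qed

lemma sym_split:
  fixes A :: "real mat"
  assumes A: "A \<in> carrier_mat n n" and S: "transpose_mat A = A"
  shows "\<exists>es. char_poly A = (\<Prod>e\<leftarrow>es. [:-e,1:])"
proof -
  let ?B = "map_mat complex_of_real A"
  have B: "?B \<in> carrier_mat n n" using A by auto
  from char_poly_factorized[OF B] obtain as where cB: "char_poly ?B = (\<Prod>a\<leftarrow>as. [:-a,1:])" by auto
  have re: "a = complex_of_real (Re a)" if "a \<in> set as" for a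
  proof -
    have "poly (char_poly ?B) a = 0" unfolding cB using that
      by (induct as, auto)
    hence "eigenvalue ?B a" using eigenvalue_root_char_poly[OF B] by simp
    from sym_eig_real[OF A S this] show ?thesis by (simp add: complex_eq_iff)
  qed
  define es where "es = map Re as"
  have "map_poly complex_of_real (\<Prod>e\<leftarrow>es. [:-e,1:]) = (\<Prod>e\<leftarrow>es. [:-complex_of_real e,1:])"
    by (induct es) (simp_all del: mult_pCons_left add: map_poly_of_real_mult)
  also have "\<dots> = (\<Prod>a\<leftarrow>as. [:-a,1:])" unfolding es_def using re
    by (induct as, auto)
  also have "\<dots> = map_poly complex_of_real (char_poly A)"
    unfolding cB[symmetric] by (rule of_real_hom.char_poly_hom[OF A])
  finally have eq: "map_poly complex_of_real (char_poly A) = map_poly complex_of_real (\<Prod>e\<leftarrow>es. [:-e,1:])" by simp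
  have "char_poly A = (\<Prod>e\<leftarrow>es. [:-e,1:])"
  proof (rule poly_eqI)
    fix i
    have "coeff (map_poly complex_of_real (char_poly A)) i = coeff (map_poly complex_of_real (\<Prod>e\<leftarrow>es. [:-e,1:])) i"
      using eq by simp
    thus "coeff (char_poly A) i = coeff (\<Prod>e\<leftarrow>es. [:-e,1:]) i" by (simp add: coeff_map_poly)
  qed
  thus ?thesis by blast
qed



lemma orth_cols:
  assumes V: "(V :: real mat) \<in> carrier_mat n n" and VV: "transpose_mat V * V = 1\<^sub>m n"
    and k: "k < n" and l: "l < n"
  shows "(\<Sum>i<n. V $$ (i,k) * V $$ (i,l)) = (if k = l then 1 else 0)"
proof -
  have "(transpose_mat V * V) $$ (k,l) = (if k = l then 1 else 0)" using VV k l by simp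
  thus ?thesis using V k l
    by (simp add: scalar_prod_def lessThan_atLeast0 row_transpose col_def)
qed

lemma orth_rows:
  assumes V: "(V :: real mat) \<in> carrier_mat n n" and VV: "transpose_mat V * V = 1\<^sub>m n"
    and k: "k < n" and l: "l < n"
  shows "(\<Sum>i<n. V $$ (k,i) * V $$ (l,i)) = (if k = l then 1 else 0)"
proof -
  have VV2: "V * transpose_mat V = 1\<^sub>m n"
    using mat_mult_left_right_inverse[OF _ V VV] V by auto
  have "(V * transpose_mat V) $$ (k,l) = (if k = l then 1 else 0)" using VV2 k l by simp
  thus ?thesis using V k l
    by (simp add: scalar_prod_def lessThan_atLeast0 col_transpose row_def)
qed

definition projm :: "nat \<Rightarrow> real mat \<Rightarrow> nat set \<Rightarrow> real mat" where
  "projm n V S = mat n n (\<lambda>(i,j). \<Sum>k\<in>S. V $$ (i,k) * V $$ (j,k))"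

lemma projm_carrier: "projm n V S \<in> carrier_mat n n" unfolding projm_def by auto

lemma projm_rank_le:
  assumes "finite S"
  shows "vec_space.rank n (projm n V S) \<le> card S"
  using assms
proof (induct S rule: finite_induct)
  case empty
  interpret vec_space "TYPE(real)" n .
  have "projm n V {} = 0\<^sub>m n n" unfolding projm_def by (rule eq_matI) auto
  thus ?case using rank_0I by simp
next
  case (insert k S)
  interpret vec_space "TYPE(real)" n .
  define R where "R = mat n n (\<lambda>(i,j). V $$ (i,k) * V $$ (j,k))"
  have R: "R \<in> carrier_mat n n" unfolding R_def by auto
  have "projm n V (insert k S) = projm n V S + R"
    unfolding projm_def R_def using insert by (intro eq_matI) (auto simp: add.commute)
  hence "rank (projm n V (insert k S)) \<le> rank (projm n V S) + rank R"
    using rank_subadditive[OF projm_carrier R] by simp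
  also have "rank R \<le> 1"
    by (rule rank_le_1_product_entries[OF R, of "\<lambda>i. V $$ (i,k)" "\<lambda>j. V $$ (j,k)"])
      (auto simp: R_def)
  finally show ?case using insert by simp
qed

lemma projm_rank:
  assumes V: "(V :: real mat) \<in> carrier_mat n n" and VV: "transpose_mat V * V = 1\<^sub>m n"
    and S: "S \<subseteq> {..<n}"
  shows "vec_space.rank n (projm n V S) = card S"
proof -
  interpret vec_space "TYPE(real)" n .
  have fS: "finite S" using S finite_subset by blast
  have "projm n V S + projm n V ({..<n} - S) = projm n V {..<n}"
    unfolding projm_def using S fS
    by (intro eq_matI) (auto simp: sum.subset_diff[of S "{..<n}"])
  also have "\<dots> = 1\<^sub>m n"
    unfolding projm_def using orth_rows[OF V VV] by (intro eq_matI) auto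
  finally have eq: "projm n V S + projm n V ({..<n} - S) = 1\<^sub>m n" .
  have "rank (1\<^sub>m n) = n" using det_rank_iff[of "1\<^sub>m n"] by simp
  hence "n \<le> rank (projm n V S) + rank (projm n V ({..<n} - S))"
    using rank_subadditive[OF projm_carrier projm_carrier] eq by metis
  also have "rank (projm n V ({..<n} - S)) \<le> card ({..<n} - S)"
    by (rule projm_rank_le) auto
  also have "card ({..<n} - S) = n - card S" using S fS by (simp add: card_Diff_subset)
  finally have "card S \<le> rank (projm n V S)" using card_mono[OF _ S] by simp
  with projm_rank_le[OF fS, of n V] show ?thesis by simp
qed

lemma projm_idem:
  assumes V: "(V :: real mat) \<in> carrier_mat n n" and VV: "transpose_mat V * V = 1\<^sub>m n"
    and S: "S \<subseteq> {..<n}"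
  shows "projm n V S * projm n V S = projm n V S"
proof (rule eq_matI)
  fix i j assume "i < dim_row (projm n V S)" "j < dim_col (projm n V S)"
  hence i: "i < n" and j: "j < n" unfolding projm_def by auto
  have "(projm n V S * projm n V S) $$ (i,j) =
    (\<Sum>l<n. (\<Sum>k\<in>S. V $$ (i,k) * V $$ (l,k)) * (\<Sum>k'\<in>S. V $$ (l,k') * V $$ (j,k')))"
    using i j by (simp add: projm_def scalar_prod_def lessThan_atLeast0 row_def col_def)
  also have "\<dots> = (\<Sum>l<n. \<Sum>k\<in>S. \<Sum>k'\<in>S. V $$ (i,k) * V $$ (l,k) * (V $$ (l,k') * V $$ (j,k')))"
    by (simp add: sum_product)
  also have "\<dots> = (\<Sum>k\<in>S. \<Sum>l<n. \<Sum>k'\<in>S. V $$ (i,k) * V $$ (l,k) * (V $$ (l,k') * V $$ (j,k')))"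
    by (rule sum.swap)
  also have "\<dots> = (\<Sum>k\<in>S. \<Sum>k'\<in>S. \<Sum>l<n. V $$ (i,k) * V $$ (l,k) * (V $$ (l,k') * V $$ (j,k')))"
    by (rule sum.cong[OF refl], rule sum.swap)
  also have "\<dots> = (\<Sum>k\<in>S. \<Sum>k'\<in>S. V $$ (i,k) * V $$ (j,k') * (\<Sum>l<n. V $$ (l,k) * V $$ (l,k')))"
    by (simp add: sum_distrib_left ac_simps)
  also have "\<dots> = (\<Sum>k\<in>S. \<Sum>k'\<in>S. V $$ (i,k) * V $$ (j,k') * (if k = k' then 1 else 0))"
  proof (intro sum.cong refl)
    fix k k' assume "k \<in> S" "k' \<in> S"
    hence "k < n" "k' < n" using S by auto
    thus "V $$ (i,k) * V $$ (j,k') * (\<Sum>l<n. V $$ (l,k) * V $$ (l,k')) = V $$ (i,k) * V $$ (j,k') * (if k = k' then 1 else 0)"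
      using orth_cols[OF V VV] by simp
  qed
  also have "\<dots> = (\<Sum>k\<in>S. V $$ (i,k) * V $$ (j,k))"
  proof -
    have fS: "finite S" using S finite_subset by blast
    show ?thesis by (rule sum.cong[OF refl]) (simp add: fS if_distrib[of "\<lambda>x. _ * x"] cong: if_cong)
  qed
  also have "\<dots> = projm n V S $$ (i,j)" using i j by (simp add: projm_def)
  finally show "(projm n V S * projm n V S) $$ (i,j) = projm n V S $$ (i,j)" .
qed (auto simp: projm_def)

lemma projm_sym: "transpose_mat (projm n V S) = projm n V S"
  unfolding projm_def by (intro eq_matI) (auto simp: mult.commute)



lemma cs_sum:
  fixes b :: "nat \<Rightarrow> real"
  shows "(\<Sum>i<N. b i)^2 \<le> real N * (\<Sum>i<N. (b i)^2)"
proof -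
  have "0 \<le> (\<Sum>i<N. \<Sum>j<N. (b i - b j)^2)" by (intro sum_nonneg) auto
  also have "(\<Sum>i<N. \<Sum>j<N. (b i - b j)^2) = (\<Sum>i<N. \<Sum>j<N. (b i)^2 + (b j)^2 - 2 * (b i * b j))"
    by (intro sum.cong refl) (simp add: power2_diff)
  also have "\<dots> = 2 * (real N * (\<Sum>i<N. (b i)^2)) - 2 * (\<Sum>i<N. b i)^2"
    by (simp add: sum_subtractf sum.distrib sum_distrib_left[symmetric] power2_eq_square sum_product[symmetric] sum_distrib_right[symmetric])
  finally show ?thesis by simp
qed

lemma orth_proj_bound:
  assumes "orth_proj N r Q"
  shows "(\<Sum>i<N. \<Sum>j<N. \<bar>Q $$ (i,j)\<bar>) \<le> real r * real N"
proof -
  from assms have Q: "Q \<in> carrier_mat N N" and QQ: "Q * Q = Q" and QT: "transpose_mat Q = Q"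
    and rk: "vec_space.rank N Q = r" unfolding orth_proj_def by auto
  from sym_split[OF Q QT] obtain es where es: "char_poly Q = (\<Prod>e\<leftarrow>es. [:-e,1:])" by blast
  from spectral[OF Q QT es] obtain V where V: "V \<in> carrier_mat N N"
    and VV: "transpose_mat V * V = 1\<^sub>m N" and VQV: "transpose_mat V * Q * V = diagm N es" by blast
  have VV2: "V * transpose_mat V = 1\<^sub>m N"
    using mat_mult_left_right_inverse[OF _ V VV] V by auto
  define D where "D = diagm N es"
  have D: "D \<in> carrier_mat N N" unfolding D_def diagm_def by auto
  have VT: "transpose_mat V \<in> carrier_mat N N" using V by auto
  have QVDV: "Q = V * D * transpose_mat V"
  proof -
    have "V * D * transpose_mat V = (V * transpose_mat V) * Q * (V * transpose_mat V)"
      unfolding D_def VQV[symmetric] using V Q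
      by (simp add: assoc_mult_mat[of _ N N _ N _ N])
    thus ?thesis using VV2 Q by simp
  qed
  have DD: "D * D = D"
  proof -
    have "D * D = transpose_mat V * (Q * (V * transpose_mat V) * Q) * V"
      unfolding D_def VQV[symmetric] using V Q
      by (simp add: assoc_mult_mat[of _ N N _ N _ N])
    also have "\<dots> = D" unfolding VV2 D_def VQV[symmetric] using Q QQ by simp
    finally show ?thesis .
  qed
  have es01: "es ! k = 0 \<or> es ! k = 1" if k: "k < N" for k
  proof -
    have "(D * D) $$ (k,k) = D $$ (k,k)" using DD by simp
    hence "es ! k * es ! k = es ! k" using k
      by (simp add: D_def diagm_def scalar_prod_def row_def col_def lessThan_atLeast0[symmetric]
          if_distrib[of "\<lambda>x. x * _"] cong: if_cong)
    thus ?thesis by (metis mult_cancel_right1 mult_eq_0_iff)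
  qed
  define S where "S = {k \<in> {..<N}. es ! k = 1}"
  have S: "S \<subseteq> {..<N}" unfolding S_def by auto
  have Qe: "Q $$ (i,j) = (\<Sum>k\<in>S. V $$ (i,k) * V $$ (j,k))" if i: "i < N" and j: "j < N" for i j
  proof -
    have "Q $$ (i,j) = (\<Sum>l<N. V $$ (i,l) * (\<Sum>k<N. D $$ (l,k) * V $$ (j,k)))"
      unfolding QVDV using i j V D
      by (simp add: scalar_prod_def row_def col_def lessThan_atLeast0)
    also have "\<dots> = (\<Sum>k<N. V $$ (i,k) * es ! k * V $$ (j,k))"
      by (intro sum.cong refl)
        (simp add: D_def diagm_def if_distrib[of "\<lambda>x. x * _"] cong: if_cong)
    also have "\<dots> = (\<Sum>k<N. if es ! k = 1 then V $$ (i,k) * V $$ (j,k) else 0)"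
      by (intro sum.cong refl) (use es01 in fastforce)
    also have "\<dots> = (\<Sum>k\<in>S. V $$ (i,k) * V $$ (j,k))"
      unfolding S_def by (rule sum.inter_filter[symmetric]) simp
    finally show ?thesis .
  qed
  have "Q = projm N V S" unfolding projm_def using Q Qe by (intro eq_matI) auto
  hence cS: "card S = r" using projm_rank[OF V VV S] rk by simp
  have "(\<Sum>i<N. \<Sum>j<N. \<bar>Q $$ (i,j)\<bar>) \<le> (\<Sum>i<N. \<Sum>j<N. \<Sum>k\<in>S. \<bar>V $$ (i,k)\<bar> * \<bar>V $$ (j,k)\<bar>)"
    by (intro sum_mono) (auto simp: Qe abs_mult[symmetric] intro: order.trans[OF sum_abs])
  also have "\<dots> = (\<Sum>k\<in>S. (\<Sum>i<N. \<bar>V $$ (i,k)\<bar>)^2)"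
    by (simp add: power2_eq_square sum_product sum.swap[of _ S])
  also have "\<dots> \<le> (\<Sum>k\<in>S. real N * (\<Sum>i<N. \<bar>V $$ (i,k)\<bar>^2))"
    by (intro sum_mono cs_sum)
  also have "\<dots> = (\<Sum>k\<in>S. real N)"
  proof (intro sum.cong refl)
    fix k assume "k \<in> S"
    hence "k < N" using S by auto
    thus "real N * (\<Sum>i<N. \<bar>V $$ (i,k)\<bar>^2) = real N"
      using orth_cols[OF V VV, of k k] by (simp add: power2_eq_square)
  qed
  also have "\<dots> = real r * real N" using cS by simp
  finally show ?thesis .
qed



lemma exists_proj:
  assumes "r \<le> N"
  shows "orth_proj N r (projm N (1\<^sub>m N) {..<r})"
proof -
  have V: "(1\<^sub>m N :: real mat) \<in> carrier_mat N N" by simp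
  have VV: "transpose_mat (1\<^sub>m N) * 1\<^sub>m N = (1\<^sub>m N :: real mat)" by simp
  have S: "{..<r} \<subseteq> {..<N}" using assms by auto
  show ?thesis unfolding orth_proj_def
    using projm_carrier projm_idem[OF V VV S] projm_sym projm_rank[OF V VV S] by simp
qed

lemma betaN_facts:
  assumes "r \<le> N"
  shows "bdd_above {(\<Sum>i<N. \<Sum>j<N. \<bar>Q $$ (i,j)\<bar>) | Q. orth_proj N r Q}"
    and "{(\<Sum>i<N. \<Sum>j<N. \<bar>Q $$ (i,j)\<bar>) | Q. orth_proj N r Q} \<noteq> {}"
    and "beta_N r N \<le> real r"
proof -
  let ?T = "{(\<Sum>i<N. \<Sum>j<N. \<bar>Q $$ (i,j)\<bar>) | Q. orth_proj N r Q}"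
  show bdd: "bdd_above ?T" unfolding bdd_above_def using orth_proj_bound by blast
  show ne: "?T \<noteq> {}" using exists_proj[OF assms] by blast
  have "Sup ?T \<le> real r * real N" by (rule cSup_least[OF ne]) (use orth_proj_bound in blast)
  thus "beta_N r N \<le> real r" unfolding beta_N_def
    by (cases "N = 0") (auto simp: field_simps)
qed

lemma beta_facts:
  assumes "r \<le> N" and "orth_proj N r Q" and Npos: "N > 0"
  shows "(\<Sum>i<N. \<Sum>j<N. \<bar>Q $$ (i,j)\<bar>) \<le> real N * beta r"
proof -
  let ?T = "{(\<Sum>i<N. \<Sum>j<N. \<bar>Q $$ (i,j)\<bar>) | Q. orth_proj N r Q}"
  have b: "beta_N r N \<le> beta r" unfolding beta_def
  proof (rule cSup_upper)
    show "bdd_above {beta_N r N |N. r \<le> N}" unfolding bdd_above_def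
      using betaN_facts(3) by blast
  qed (use assms in auto)
  have "(\<Sum>i<N. \<Sum>j<N. \<bar>Q $$ (i,j)\<bar>) \<le> Sup ?T"
    by (rule cSup_upper) (use assms betaN_facts(1)[OF assms(1)] in auto)
  also have "\<dots> = real N * beta_N r N" unfolding beta_N_def using Npos by simp
  also have "\<dots> \<le> real N * beta r" using b by (simp add: mult_left_mono)
  finally show ?thesis .
qed



lemma proots_lin: "proots (\<Prod>e\<leftarrow>es. [:-e,1:]) = mset (es :: real list)"
proof (induct es)
  case (Cons e es)
  have nz: "(\<Prod>e\<leftarrow>es. [:-e,1:]) \<noteq> (0 :: real poly)"
    by (auto simp: prod_list_zero_iff)
  have "proots (\<Prod>e\<leftarrow>e#es. [:-e,1:]) = proots [:-e,1:] + proots (\<Prod>e\<leftarrow>es. [:-e,1:])"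
    using nz by (simp add: proots_mult del: mult_pCons_left)
  thus ?case using Cons by simp
qed simp

lemma eig_desc:
  fixes M :: "real mat"
  assumes M: "M \<in> carrier_mat n n" and cp: "char_poly M = (\<Prod>e\<leftarrow>es0. [:-e,1:])"
  shows "char_poly M = (\<Prod>e\<leftarrow>eigenvalues_desc M. [:-e,1:])"
    and "length (eigenvalues_desc M) = n"
    and "\<And>k l. k \<le> l \<Longrightarrow> l < n \<Longrightarrow> eigenvalues_desc M ! l \<le> eigenvalues_desc M ! k"
proof -
  let ?L = "sorted_list_of_multiset (mset es0)"
  have ed: "eigenvalues_desc M = rev ?L"
    unfolding eigenvalues_desc_def cp proots_lin ..
  have ms: "mset (eigenvalues_desc M) = mset es0" unfolding ed by simp
  have "(\<Prod>e\<leftarrow>eigenvalues_desc M. [:-e,1:]) = (\<Prod>e\<leftarrow>es0. [:-e,1:])"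
    by (metis ms mset_map prod_mset_prod_list)
  thus "char_poly M = (\<Prod>e\<leftarrow>eigenvalues_desc M. [:-e,1:])" using cp by simp
  have "degree (char_poly M) = n" using degree_monic_char_poly[OF M] by simp
  hence "length es0 = n" unfolding cp using degree_linear_factors[of uminus es0] by simp
  thus len: "length (eigenvalues_desc M) = n" using ms by (metis size_mset)
  fix k l assume kl: "k \<le> l" "l < n"
  have lL: "length ?L = n" using len unfolding ed by simp
  have "?L ! (n - 1 - l) \<le> ?L ! (n - 1 - k)"
    by (rule sorted_nth_mono) (use kl lL in auto)
  thus "eigenvalues_desc M ! l \<le> eigenvalues_desc M ! k" unfolding ed using kl lL
    by (simp add: rev_nth)
qed



lemma householder:
  fixes c :: "real vec"
  assumes c: "c \<in> carrier_vec n" and rn: "r < n" and cz: "\<And>j. r < j \<Longrightarrow> j < n \<Longrightarrow> c$j = 0"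
  shows "\<exists>H. H \<in> carrier_mat n n \<and> transpose_mat H * H = 1\<^sub>m n \<and>
          (\<forall>k<r. (\<Sum>j<n. H $$ (j,k) * c$j) = 0) \<and> (\<forall>k<r. \<forall>j<n. r < j \<longrightarrow> H $$ (j,k) = 0)"
proof -
  define g where "g = sqrt (c \<bullet> c)"
  define w where "w = vec n (\<lambda>j. c$j - (if j = r then g else 0))"
  define t where "t = 2 / (w \<bullet> w)"
  define H where "H = mat n n (\<lambda>(i,j). (if i = j then 1 else 0) - t * (w$i * w$j))"
  have w: "w \<in> carrier_vec n" unfolding w_def by simp
  have cc: "c \<bullet> c = (\<Sum>l<n. c$l * c$l)" using c by (simp add: scalar_prod_def lessThan_atLeast0)
  have ccpos: "c \<bullet> c \<ge> 0" unfolding cc by (intro sum_nonneg) auto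
  have gg: "g * g = c \<bullet> c" unfolding g_def using ccpos by simp
  have ww: "w \<bullet> w = (\<Sum>l<n. w$l * w$l)" using w by (simp add: scalar_prod_def lessThan_atLeast0)
  have wc: "w \<bullet> c = (\<Sum>l<n. w$l * c$l)" using w c by (simp add: scalar_prod_def lessThan_atLeast0)
  have wl: "w$l = c$l - (if l = r then g else 0)" if "l < n" for l using that unfolding w_def by simp
  have wc2: "w \<bullet> c = c \<bullet> c - g * c$r"
  proof -
    have "w \<bullet> c = (\<Sum>l<n. c$l * c$l - (if l = r then g * c$l else 0))"
      unfolding wc by (intro sum.cong refl) (auto simp: wl algebra_simps)
    also have "\<dots> = c \<bullet> c - g * c$r" unfolding cc using rn by (simp add: sum_subtractf)
    finally show ?thesis .
  qed
  have ww2: "w \<bullet> w = 2 * (w \<bullet> c)"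
  proof -
    have "w \<bullet> w = (\<Sum>l<n. c$l * c$l - (if l = r then 2 * g * c$l - g * g else 0))"
      unfolding ww by (intro sum.cong refl) (auto simp: wl algebra_simps)
    also have "\<dots> = c \<bullet> c - (2 * g * c$r - g * g)" unfolding cc using rn by (simp add: sum_subtractf)
    finally show ?thesis unfolding wc2 gg by simp
  qed
  have tw: "t * (w$k * (w \<bullet> c)) = w$k" if "k < n" for k
  proof (cases "w \<bullet> w = 0")
    case True
    hence "w = 0\<^sub>v n" using real_sq_zero[OF w] by simp
    thus ?thesis using that by simp
  next
    case False
    thus ?thesis unfolding t_def ww2 by (simp add: field_simps)
  qed
  have tt: "t * t * (w \<bullet> w) = 2 * t"
    unfolding t_def by (cases "w \<bullet> w = 0") (auto simp: field_simps power2_eq_square)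
  have H: "H \<in> carrier_mat n n" unfolding H_def by simp
  have He: "H $$ (i,j) = (if i = j then 1 else 0) - t * (w$i * w$j)" if "i < n" "j < n" for i j
    using that unfolding H_def by simp
  have HH: "transpose_mat H * H = 1\<^sub>m n"
  proof (rule eq_matI)
    fix i j assume "i < dim_row (1\<^sub>m n :: real mat)" "j < dim_col (1\<^sub>m n :: real mat)"
    hence i: "i < n" and j: "j < n" by auto
    have "(transpose_mat H * H) $$ (i,j) = (\<Sum>l<n. H $$ (l,i) * H $$ (l,j))"
      using i j H by (simp add: scalar_prod_def lessThan_atLeast0 row_transpose col_def)
    also have "\<dots> = (\<Sum>l<n. (if l = i then 1 else 0) * (if l = j then 1 else 0)
        - t * w$i * (if l = j then w$l else 0) - t * w$j * (if l = i then w$l else 0)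
        + t * t * w$i * w$j * (w$l * w$l))"
      by (intro sum.cong refl) (auto simp: He i j algebra_simps)
    also have "\<dots> = (if i = j then 1 else 0) - t * w$i * w$j - t * w$j * w$i + t * t * w$i * w$j * (w \<bullet> w)"
      unfolding ww using i j
      by (simp add: sum.distrib sum_subtractf sum_distrib_left[symmetric] if_distrib[of "\<lambda>x. x * _"] cong: if_cong)
    also have "\<dots> = (if i = j then 1 else 0)"
      using tt by (simp add: algebra_simps) (metis mult.assoc mult.commute)
    finally show "(transpose_mat H * H) $$ (i,j) = 1\<^sub>m n $$ (i,j)" using i j by simp
  qed (use H in auto)
  show ?thesis
  proof (intro exI conjI allI impI)
    show "H \<in> carrier_mat n n" by fact
    show "transpose_mat H * H = 1\<^sub>m n" by fact
    fix k assume k: "k < r"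
    hence kn: "k < n" using rn by simp
    have "(\<Sum>j<n. H $$ (j,k) * c$j) = (\<Sum>j<n. (if j = k then c$j else 0) - t * w$k * (w$j * c$j))"
      by (intro sum.cong refl) (auto simp: He kn algebra_simps)
    also have "\<dots> = c$k - t * (w$k * (w \<bullet> c))"
      unfolding wc using kn by (simp add: sum_subtractf sum_distrib_left[symmetric] mult.assoc)
    also have "\<dots> = c$k - w$k" using tw[OF kn] by simp
    also have "\<dots> = 0" using wl[OF kn] k by simp
    finally show "(\<Sum>j<n. H $$ (j,k) * c$j) = 0" .
    fix j assume "j < n" "r < j"
    thus "H $$ (j,k) = 0" using He[of j k] kn k wl[of j] cz[of j] by simp
  qed
qed



theorem mainTheorem3:
  fixes r n :: nat and E :: "nat \<Rightarrow> nat \<Rightarrow> bool"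
  assumes "r \<ge> 1" and "n \<ge> r + 1" and "simple_graph n E"
  shows "eigenvalues_desc (adj_mat n E) ! r \<le> beta r / (2 * real r) * real n - 1"
proof -
  define M where "M = adj_mat n E"
  have M: "M \<in> carrier_mat n n" by (simp add: M_def adj_mat_def)
  have Me: "M $$ (i,j) = (if E i j then 1 else 0)" if "i < n" "j < n" for i j
    using that by (simp add: M_def adj_mat_def)
  have MT: "transpose_mat M = M"
    by (rule eq_matI) (use M assms(3) in \<open>auto simp: Me simple_graph_def\<close>)
  have Md: "M $$ (i,i) = 0" if "i < n" for i using that assms(3) by (simp add: Me simple_graph_def)
  have rn: "r < n" using assms by simp
  from sym_split[OF M MT] obtain es0 where cp0: "char_poly M = (\<Prod>e\<leftarrow>es0. [:-e,1:])" by blast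
  define es where "es = eigenvalues_desc M"
  note ed = eig_desc[OF M cp0, folded es_def]
  from spectral[OF M MT ed(1)] obtain U where U: "U \<in> carrier_mat n n"
    and UU: "transpose_mat U * U = 1\<^sub>m n" and UMU: "transpose_mat U * M * U = diagm n es" by blast
  define mu where "mu = es ! r"
  have esge: "mu \<le> es ! j" if "j \<le> r" for j unfolding mu_def using ed(3)[OF that rn] .
  define c where "c = vec n (\<lambda>j. if j \<le> r then (\<Sum>i<n. U $$ (i,j)) else 0)"
  have c: "c \<in> carrier_vec n" unfolding c_def by simp
  from householder[OF c rn] obtain H where H: "H \<in> carrier_mat n n"
    and HH: "transpose_mat H * H = 1\<^sub>m n"
    and Hc: "\<And>k. k < r \<Longrightarrow> (\<Sum>j<n. H $$ (j,k) * c$j) = 0"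
    and Hz: "\<And>k j. k < r \<Longrightarrow> j < n \<Longrightarrow> r < j \<Longrightarrow> H $$ (j,k) = 0"
    by (auto simp: c_def)
  define X where "X = U * H"
  have X: "X \<in> carrier_mat n n" unfolding X_def using U H by simp
  have XT: "transpose_mat X = transpose_mat H * transpose_mat U"
    unfolding X_def by (rule transpose_mult[OF U H])
  have XX: "transpose_mat X * X = 1\<^sub>m n"
  proof -
    have "transpose_mat X * X = transpose_mat H * (transpose_mat U * U) * H"
      unfolding XT unfolding X_def using U H by (simp add: assoc_mult_mat[of _ n n _ n _ n])
    thus ?thesis using UU HH H by simp
  qed
  have Xe: "X $$ (i,k) = (\<Sum>j<n. U $$ (i,j) * H $$ (j,k))" if "i < n" "k < n" for i k
    using that U H unfolding X_def by (simp add: scalar_prod_def lessThan_atLeast0 row_def col_def)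
  have E1: "(\<Sum>i<n. X $$ (i,k)) = 0" if k: "k < r" for k
  proof -
    have kn: "k < n" using k rn by simp
    have "(\<Sum>i<n. X $$ (i,k)) = (\<Sum>i<n. \<Sum>j<n. U $$ (i,j) * H $$ (j,k))"
      using kn by (simp add: Xe)
    also have "\<dots> = (\<Sum>j<n. \<Sum>i<n. U $$ (i,j) * H $$ (j,k))" by (rule sum.swap)
    also have "\<dots> = (\<Sum>j<n. H $$ (j,k) * c$j)"
    proof (intro sum.cong refl)
      fix j assume j: "j \<in> {..<n}"
      show "(\<Sum>i<n. U $$ (i,j) * H $$ (j,k)) = H $$ (j,k) * c$j"
      proof (cases "j \<le> r")
        case True thus ?thesis using j by (simp add: c_def sum_distrib_left mult.commute)
      next
        case False thus ?thesis using j Hz[OF k, of j] by simp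
      qed
    qed
    also have "\<dots> = 0" using Hc[OF k] .
    finally show ?thesis .
  qed
  have E2: "mu \<le> (transpose_mat X * M * X) $$ (k,k)" if k: "k < r" for k
  proof -
    have kn: "k < n" using k rn by simp
    have "transpose_mat X * M * X = transpose_mat H * (transpose_mat U * M * U) * H"
      unfolding XT unfolding X_def using U H M by (simp add: assoc_mult_mat[of _ n n _ n _ n])
    hence "(transpose_mat X * M * X) $$ (k,k) = (transpose_mat H * diagm n es * H) $$ (k,k)"
      using UMU by simp
    also have "\<dots> = (\<Sum>m<n. (\<Sum>l<n. H $$ (l,k) * diagm n es $$ (l,m)) * H $$ (m,k))"
      using kn H by (simp add: diagm_def scalar_prod_def lessThan_atLeast0 row_def col_def)
    also have "\<dots> = (\<Sum>l<n. es ! l * (H $$ (l,k) * H $$ (l,k)))"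
      by (intro sum.cong refl)
        (simp add: diagm_def if_distrib[of "\<lambda>x. _ * x"] mult.commute mult.left_commute cong: if_cong)
    also have "\<dots> \<ge> (\<Sum>l<n. mu * (H $$ (l,k) * H $$ (l,k)))"
    proof (intro sum_mono)
      fix l assume l: "l \<in> {..<n}"
      show "mu * (H $$ (l,k) * H $$ (l,k)) \<le> es ! l * (H $$ (l,k) * H $$ (l,k))"
      proof (cases "l \<le> r")
        case True thus ?thesis using esge[OF True] by (intro mult_right_mono) auto
      next
        case False thus ?thesis using l Hz[OF k, of l] by simp
      qed
    qed
    also have "(\<Sum>l<n. mu * (H $$ (l,k) * H $$ (l,k))) = mu"
      using orth_cols[OF H HH kn kn] by (simp add: sum_distrib_left[symmetric])
    finally show ?thesis .
  qed
  have E3: "(transpose_mat X * M * X) $$ (k,k) = (\<Sum>a<n. \<Sum>b<n. M $$ (a,b) * (X $$ (a,k) * X $$ (b,k)))"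
    if k: "k < n" for k
  proof -
    have "(transpose_mat X * M * X) $$ (k,k) = col X k \<bullet> (M *\<^sub>v col X k)"
      by (rule congr_entry[OF X M k k])
    also have "\<dots> = (\<Sum>a<n. X $$ (a,k) * (\<Sum>b<n. M $$ (a,b) * X $$ (b,k)))"
      using X M k by (simp add: scalar_prod_def lessThan_atLeast0 mult_mat_vec_def row_def col_def)
    also have "\<dots> = (\<Sum>a<n. \<Sum>b<n. M $$ (a,b) * (X $$ (a,k) * X $$ (b,k)))"
      by (simp add: sum_distrib_left ac_simps)
    finally show ?thesis .
  qed
  define Q where "Q = projm n X {..<r}"
  have Sr: "{..<r} \<subseteq> {..<n}" using rn by auto
  have oQ: "orth_proj n r Q" unfolding orth_proj_def Q_def
    using projm_carrier projm_idem[OF X XX Sr] projm_sym projm_rank[OF X XX Sr] by simp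
  have Qe: "Q $$ (i,j) = (\<Sum>k<r. X $$ (i,k) * X $$ (j,k))" if "i < n" "j < n" for i j
    using that unfolding Q_def projm_def by simp
  have T1: "(\<Sum>i<n. Q $$ (i,i)) = real r"
  proof -
    have "(\<Sum>i<n. Q $$ (i,i)) = (\<Sum>i<n. \<Sum>k<r. X $$ (i,k) * X $$ (i,k))"
      by (simp add: Qe)
    also have "\<dots> = (\<Sum>k<r. \<Sum>i<n. X $$ (i,k) * X $$ (i,k))" by (rule sum.swap)
    also have "\<dots> = (\<Sum>k<r. 1)" using orth_cols[OF X XX] rn by (intro sum.cong refl) auto
    finally show ?thesis by simp
  qed
  have T2: "(\<Sum>i<n. \<Sum>j<n. Q $$ (i,j)) = 0"
  proof -
    have "(\<Sum>i<n. \<Sum>j<n. Q $$ (i,j)) = (\<Sum>i<n. \<Sum>j<n. \<Sum>k<r. X $$ (i,k) * X $$ (j,k))"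
      by (simp add: Qe)
    also have "\<dots> = (\<Sum>i<n. \<Sum>k<r. \<Sum>j<n. X $$ (i,k) * X $$ (j,k))"
      by (rule sum.cong[OF refl], rule sum.swap)
    also have "\<dots> = (\<Sum>k<r. \<Sum>i<n. \<Sum>j<n. X $$ (i,k) * X $$ (j,k))" by (rule sum.swap)
    also have "\<dots> = (\<Sum>k<r. (\<Sum>i<n. X $$ (i,k)) * (\<Sum>j<n. X $$ (j,k)))"
      by (simp add: sum_product)
    also have "\<dots> = 0" using E1 by simp
    finally show ?thesis .
  qed
  have T3: "real r * mu \<le> (\<Sum>i<n. \<Sum>j<n. M $$ (i,j) * Q $$ (i,j))"
  proof -
    have "(\<Sum>i<n. \<Sum>j<n. M $$ (i,j) * Q $$ (i,j)) = (\<Sum>i<n. \<Sum>j<n. \<Sum>k<r. M $$ (i,j) * (X $$ (i,k) * X $$ (j,k)))"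
      by (simp add: Qe sum_distrib_left)
    also have "\<dots> = (\<Sum>i<n. \<Sum>k<r. \<Sum>j<n. M $$ (i,j) * (X $$ (i,k) * X $$ (j,k)))"
      by (rule sum.cong[OF refl], rule sum.swap)
    also have "\<dots> = (\<Sum>k<r. \<Sum>i<n. \<Sum>j<n. M $$ (i,j) * (X $$ (i,k) * X $$ (j,k)))" by (rule sum.swap)
    also have "\<dots> = (\<Sum>k<r. (transpose_mat X * M * X) $$ (k,k))"
      using E3 rn by (intro sum.cong refl) auto
    also have "\<dots> \<ge> (\<Sum>k<r. mu)" using E2 by (intro sum_mono) auto
    finally show ?thesis by simp
  qed
  have key: "2 * real r * mu + 2 * real r \<le> (\<Sum>i<n. \<Sum>j<n. \<bar>Q $$ (i,j)\<bar>)"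
  proof -
    have "(\<Sum>i<n. \<Sum>j<n. (2 * M $$ (i,j) - 1 + (if i = j then 2 else 0)) * Q $$ (i,j))
        = 2 * (\<Sum>i<n. \<Sum>j<n. M $$ (i,j) * Q $$ (i,j)) - (\<Sum>i<n. \<Sum>j<n. Q $$ (i,j)) + 2 * (\<Sum>i<n. Q $$ (i,i))"
      by (simp add: algebra_simps sum.distrib sum_subtractf sum_distrib_left if_distrib[of "\<lambda>x. x * _"] if_distrib[of "\<lambda>x. _ * x"] cong: if_cong)
    also have "\<dots> \<ge> 2 * real r * mu + 2 * real r" using T1 T2 T3 by simp
    finally have "2 * real r * mu + 2 * real r \<le> (\<Sum>i<n. \<Sum>j<n. (2 * M $$ (i,j) - 1 + (if i = j then 2 else 0)) * Q $$ (i,j))" .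
    also have "\<dots> \<le> (\<Sum>i<n. \<Sum>j<n. \<bar>Q $$ (i,j)\<bar>)"
    proof (intro sum_mono)
      fix i j assume i: "i \<in> {..<n}" and j: "j \<in> {..<n}"
      show "(2 * M $$ (i,j) - 1 + (if i = j then 2 else 0)) * Q $$ (i,j) \<le> \<bar>Q $$ (i,j)\<bar>"
      proof (cases "i = j")
        case True thus ?thesis using Md i by simp
      next
        case False
        hence "2 * M $$ (i,j) - 1 + (if i = j then 2 else 0) = 1 \<or> 2 * M $$ (i,j) - 1 + (if i = j then 2 else 0) = -1"
          using i j by (simp add: Me)
        thus ?thesis using False by auto
      qed
    qed
    finally show ?thesis .
  qed
  have "(\<Sum>i<n. \<Sum>j<n. \<bar>Q $$ (i,j)\<bar>) \<le> real n * beta r"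
    by (rule beta_facts[OF _ oQ]) (use rn in auto)
  with key have "2 * real r * mu + 2 * real r \<le> real n * beta r" by linarith
  moreover have "real r > 0" using assms(1) by simp
  ultimately have "mu \<le> beta r / (2 * real r) * real n - 1"
    by (simp add: field_simps)
  thus ?thesis unfolding mu_def es_def M_def .
qed

end
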